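(* Let $X$ be a second-countable Hausdorff topological space and $T:X\to X$ a continuous map. The following are equivalent: (i) $T$ is topologically quasi-rigid; (ii) for every $N\in\mathbb{N}$, the $N$-fold direct product $T_{(N)}:X^N\to X^N$ is topologically recurrent.
   Context: A dynamical system $(X,T)$ is a continuous self-map $T$ of a Hausdorff topological space $X$. For $N\in\mathbb{N}$, $T_{(N)}:X^N\to X^N$ is $T_{(N)}(x_1,\dots,x_N)=(Tx_1,\dots,Tx_N)$. A map $T$ is topologically recurrent if for every non-empty open $U\subset X$ there is $n\in\mathbb{N}$ with $T^n(U)\cap U\neq\varnothing$. $T$ is topologically quasi-rigid with respect to a strictly increasing sequence $(n_k)_{k\in\mathbb{N}}$ of positive integers if for every non-empty open $U\subset X$ there is $k_U$ with $T^{n_k}(U)\cap U\neq\varnothing$ for all $k\geq k_U$; $T$ is topologically quasi-rigid if it is so with respect to some such sequence. *)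

theory Defs
  imports "HOL-Analysis.Analysis"
begin

definition top_recurrent :: "'a topology \<Rightarrow> ('a \<Rightarrow> 'a) \<Rightarrow> bool" where
  "top_recurrent X T \<longleftrightarrow>
     (\<forall>U. openin X U \<and> U \<noteq> {} \<longrightarrow> (\<exists>n::nat. n \<ge> 1 \<and> (T ^^ n) ` U \<inter> U \<noteq> {}))"

definition top_quasi_rigid_wrt :: "'a topology \<Rightarrow> ('a \<Rightarrow> 'a) \<Rightarrow> (nat \<Rightarrow> nat) \<Rightarrow> bool" where
  "top_quasi_rigid_wrt X T nk \<longleftrightarrow>
     strict_mono nk \<and> (\<forall>k. nk k \<ge> 1) \<and>
     (\<forall>U. openin X U \<and> U \<noteq> {} \<longrightarrow>
        (\<exists>kU. \<forall>k\<ge>kU. (T ^^ nk k) ` U \<inter> U \<noteq> {}))"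

definition top_quasi_rigid :: "'a topology \<Rightarrow> ('a \<Rightarrow> 'a) \<Rightarrow> bool" where
  "top_quasi_rigid X T \<longleftrightarrow> (\<exists>nk. top_quasi_rigid_wrt X T nk)"

text \<open>The N-fold direct product X^N, modelled as extensional functions on
  {..<N} with the product topology, and the product map T_(N).\<close>
definition power_space :: "'a topology \<Rightarrow> nat \<Rightarrow> (nat \<Rightarrow> 'a) topology" where
  "power_space X N = product_topology (\<lambda>_. X) {..<N}"

definition prod_map :: "nat \<Rightarrow> ('a \<Rightarrow> 'a) \<Rightarrow> (nat \<Rightarrow> 'a) \<Rightarrow> (nat \<Rightarrow> 'a)" where
  "prod_map N T x = restrict (\<lambda>i. T (x i)) {..<N}"

end

theory Submission
  imports Defs
begin

lemma cm_funpow: "continuous_map Y Y S \<Longrightarrow> continuous_map Y Y (S ^^ n)"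
  by (induction n) (auto intro: continuous_map_compose)

lemma ret_iff: "(S ^^ n) ` U \<inter> U \<noteq> {} \<longleftrightarrow> (\<exists>x\<in>U. (S ^^ n) x \<in> U)"
  by blast

lemma large_returns:
  assumes S: "continuous_map Y Y S" and R: "top_recurrent Y S"
  shows "\<forall>U. openin Y U \<and> U \<noteq> {} \<longrightarrow> (\<exists>n>L. \<exists>x\<in>U. (S ^^ n) x \<in> U)"
proof (induction L)
  case 0
  then show ?case using R unfolding top_recurrent_def ret_iff
    by (metis Suc_le_eq One_nat_def)
next
  case (Suc L)
  show ?case
  proof (intro allI impI)
    fix U assume U: "openin Y U \<and> U \<noteq> {}"
    then obtain n x where n: "n \<ge> 1" "x \<in> U" "(S ^^ n) x \<in> U"
      using R unfolding top_recurrent_def ret_iff by blast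
    define W where "W = U \<inter> {y \<in> topspace Y. (S ^^ n) y \<in> U}"
    have "openin Y W" unfolding W_def
      using U cm_funpow[OF S] openin_continuous_map_preimage by blast
    moreover have "x \<in> W" using n U openin_subset unfolding W_def by blast
    ultimately obtain m y where m: "m > L" "y \<in> W" "(S ^^ m) y \<in> W"
      using Suc by blast
    have "(S ^^ (n + m)) y = (S ^^ n) ((S ^^ m) y)" by (simp add: funpow_add)
    then have "(S ^^ (n + m)) y \<in> U" using m unfolding W_def by auto
    moreover have "y \<in> U" using m unfolding W_def by auto
    moreover have "n + m > Suc L" using n m by simp
    ultimately show "\<exists>n>Suc L. \<exists>x\<in>U. (S ^^ n) x \<in> U" by blast
  qed
qed

lemma prod_map_funpow:
  "x \<in> extensional {..<N} \<Longrightarrow> (prod_map N T ^^ n) x = restrict (\<lambda>i. (T ^^ n) (x i)) {..<N}"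
proof (induction n)
  case 0
  then show ?case by (simp add: extensional_restrict)
next
  case (Suc n)
  then show ?case by (auto simp: prod_map_def restrict_def)
qed

lemma prod_map_cont:
  assumes "continuous_on UNIV T"
  shows "continuous_map (power_space euclidean N) (power_space euclidean N) (prod_map N T)"
  unfolding power_space_def continuous_map_componentwise
proof (intro conjI ballI)
  show "prod_map N T ` topspace (product_topology (\<lambda>_. euclidean) {..<N}) \<subseteq> extensional {..<N}"
    by (auto simp: prod_map_def)
  fix k assume k: "k \<in> {..<N}"
  have "continuous_map (product_topology (\<lambda>_. euclidean) {..<N}) euclidean (T \<circ> (\<lambda>x. x k))"
    using continuous_map_product_projection[OF k] assms
    by (intro continuous_map_compose) auto
  moreover have "(T \<circ> (\<lambda>x. x k)) = (\<lambda>x. prod_map N T x k)"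
    using k by (auto simp: prod_map_def)
  ultimately show "continuous_map (product_topology (\<lambda>_. euclidean) {..<N}) euclidean (\<lambda>x. prod_map N T x k)"
    by simp
qed

theorem mainTheorem1:
  fixes T :: "'a::{t2_space, second_countable_topology} \<Rightarrow> 'a"
  assumes "continuous_on UNIV T"
  shows "top_quasi_rigid euclidean T \<longleftrightarrow>
         (\<forall>N::nat. N \<ge> 1 \<longrightarrow> top_recurrent (power_space euclidean N) (prod_map N T))"
proof
  assume "top_quasi_rigid euclidean T"
  then obtain nk where nk: "top_quasi_rigid_wrt euclidean T nk" unfolding top_quasi_rigid_def by blast
  show "\<forall>N::nat. N \<ge> 1 \<longrightarrow> top_recurrent (power_space euclidean N) (prod_map N T)"
  proof (intro allI impI)
    fix N :: nat assume "N \<ge> 1"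
    show "top_recurrent (power_space euclidean N) (prod_map N T)"
      unfolding top_recurrent_def ret_iff
    proof (intro allI impI)
      fix U :: "(nat \<Rightarrow> 'a) set" assume U: "openin (power_space euclidean N) U \<and> U \<noteq> {}"
      then obtain z where z: "z \<in> U" by blast
      obtain V :: "nat \<Rightarrow> 'a set" where V: "z \<in> (\<Pi>\<^sub>E i\<in>{..<N}. V i)" "\<forall>i. open (V i)" "(\<Pi>\<^sub>E i\<in>{..<N}. V i) \<subseteq> U"
        using product_topology_open_contains_basis[OF U[unfolded power_space_def, THEN conjunct1] z]
        by auto
      have "\<forall>i\<in>{..<N}. \<exists>kU. \<forall>k\<ge>kU. (T ^^ nk k) ` V i \<inter> V i \<noteq> {}"
        using nk V unfolding top_quasi_rigid_wrt_def by (metis PiE_iff empty_iff open_openin)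
      then obtain kf where kf: "\<And>i k. i \<in> {..<N} \<Longrightarrow> k \<ge> kf i \<Longrightarrow> (T ^^ nk k) ` V i \<inter> V i \<noteq> {}"
        by metis
      define K where "K = Max (kf ` {..<N})"
      have "\<And>i. i \<in> {..<N} \<Longrightarrow> \<exists>y\<in>V i. (T ^^ nk K) y \<in> V i"
        using kf K_def by (metis Max_ge finite_imageI finite_lessThan image_eqI ret_iff)
      then obtain y where y: "\<And>i. i \<in> {..<N} \<Longrightarrow> y i \<in> V i \<and> (T ^^ nk K) (y i) \<in> V i"
        by metis
      define x where "x = restrict y {..<N}"
      have xin: "x \<in> (\<Pi>\<^sub>E i\<in>{..<N}. V i)" using y by (auto simp: x_def)
      have "(prod_map N T ^^ nk K) x = restrict (\<lambda>i. (T ^^ nk K) (x i)) {..<N}"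
        by (rule prod_map_funpow) (simp add: x_def)
      also have "\<dots> \<in> (\<Pi>\<^sub>E i\<in>{..<N}. V i)" using y by (auto simp: x_def)
      finally have "(prod_map N T ^^ nk K) x \<in> U" using V by blast
      moreover have "nk K \<ge> 1" using nk unfolding top_quasi_rigid_wrt_def by blast
      ultimately show "\<exists>n\<ge>1. \<exists>x\<in>U. (prod_map N T ^^ n) x \<in> U" using xin V by blast
    qed
  qed
next
  assume R: "\<forall>N::nat. N \<ge> 1 \<longrightarrow> top_recurrent (power_space euclidean N) (prod_map N T)"
  obtain B :: "'a set set" where B: "countable B" "topological_basis B" using ex_countable_basis by blast
  define B' where "B' = B - {{}}"
  have "countable B'" using B by (simp add: B'_def)
  have "B' \<noteq> {}"
  proof -
    obtain a :: 'a where True by blast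
    from topological_basisE[OF B(2) open_UNIV, of a] obtain b where "b \<in> B" "a \<in> b" by blast
    then show ?thesis by (auto simp: B'_def)
  qed
  define V where "V = from_nat_into B'"
  have Vopen: "open (V m) \<and> V m \<noteq> {}" for m
  proof -
    have "V m \<in> B'" unfolding V_def by (rule from_nat_into[OF \<open>B' \<noteq> {}\<close>])
    then have "V m \<in> B" "V m \<noteq> {}" by (auto simp: B'_def)
    then show ?thesis using topological_basis_open[OF B(2)] by simp
  qed
  have Vcov: "\<exists>m. V m \<subseteq> U" if U: "open U" "U \<noteq> {}" for U
  proof -
    obtain a where "a \<in> U" using U by blast
    from topological_basisE[OF B(2) U(1) this] obtain b where "b \<in> B" "a \<in> b" "b \<subseteq> U" by blast
    then have "b \<in> B'" by (auto simp: B'_def)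
    then obtain m where "from_nat_into B' m = b" using from_nat_into_surj[OF \<open>countable B'\<close>] by blast
    then show ?thesis using \<open>b \<subseteq> U\<close> unfolding V_def by blast
  qed
  have big: "\<exists>n>L. \<forall>j\<le>M. \<exists>y\<in>V j. (T ^^ n) y \<in> V j" for M L
  proof -
    let ?N = "Suc M"
    let ?U = "\<Pi>\<^sub>E i\<in>{..<?N}. V i"
    have eq: "?U = (\<Pi>\<^sub>E i\<in>{..<?N}. (if i < ?N then V i else UNIV))"
      by (rule PiE_cong) auto
    have Uo: "openin (power_space euclidean ?N) ?U"
      unfolding power_space_def eq
    proof (rule product_topology_basis)
      show "openin euclidean (if i < ?N then V i else UNIV)" for i using Vopen by simp
      have "{i. (if i < ?N then V i else UNIV) \<noteq> topspace euclidean} \<subseteq> {..<?N}" by auto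
      then show "finite {i. (if i < ?N then V i else UNIV) \<noteq> topspace euclidean}"
        using finite_subset by blast
    qed
    have Une: "?U \<noteq> {}" using Vopen by (simp add: PiE_eq_empty_iff)
    have LR: "\<forall>U. openin (power_space euclidean ?N) U \<and> U \<noteq> {} \<longrightarrow> (\<exists>n>L. \<exists>x\<in>U. (prod_map ?N T ^^ n) x \<in> U)"
      by (rule large_returns[OF prod_map_cont[OF assms] R[rule_format]]) simp
    have "\<exists>n>L. \<exists>x\<in>?U. (prod_map ?N T ^^ n) x \<in> ?U"
      using LR[rule_format, OF conjI[OF Uo Une]] .
    then obtain n x where n: "n > L" "x \<in> ?U" "(prod_map ?N T ^^ n) x \<in> ?U"
      by blast
    have xe: "x \<in> extensional {..<?N}" using n(2) by (simp add: PiE_iff)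
    have eqn: "(prod_map ?N T ^^ n) x = restrict (\<lambda>i. (T ^^ n) (x i)) {..<?N}"
      using xe by (rule prod_map_funpow)
    have "\<forall>j\<le>M. \<exists>y\<in>V j. (T ^^ n) y \<in> V j"
    proof (intro allI impI)
      fix j assume j: "j \<le> M"
      then have jN: "j \<in> {..<?N}" by simp
      have "x j \<in> V j" using n(2) jN by (rule PiE_mem)
      moreover have "(prod_map ?N T ^^ n) x j \<in> V j" using n(3) jN by (rule PiE_mem)
      then have "(T ^^ n) (x j) \<in> V j" using jN by (simp add: eqn)
      ultimately show "\<exists>y\<in>V j. (T ^^ n) y \<in> V j" by blast
    qed
    then show ?thesis using n(1) by blast
  qed
  define f where "f M L = (SOME n. n > L \<and> (\<forall>j\<le>M. \<exists>y\<in>V j. (T ^^ n) y \<in> V j))" for M L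
  have f: "f M L > L \<and> (\<forall>j\<le>M. \<exists>y\<in>V j. (T ^^ f M L) y \<in> V j)" for M L
    unfolding f_def by (rule someI_ex) (rule big)
  define nk where "nk = rec_nat (f 0 0) (\<lambda>k p. f (Suc k) p)"
  have nk0: "nk 0 = f 0 0" and nkS: "nk (Suc k) = f (Suc k) (nk k)" for k
    by (simp_all add: nk_def)
  have nkret: "\<forall>j\<le>k. \<exists>y\<in>V j. (T ^^ nk k) y \<in> V j" for k
  proof (cases k)
    case 0
    then have e: "nk k = f k 0" by (simp only: nk0)
    show ?thesis unfolding e by (rule conjunct2[OF f])
  next
    case (Suc k')
    then have e: "nk k = f k (nk k')" by (simp only: nkS)
    show ?thesis unfolding e by (rule conjunct2[OF f])
  qed
  have "strict_mono nk"
  proof (rule strict_mono_Suc_iff[THEN iffD2], rule allI)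
    fix k
    have "nk k < f (Suc k) (nk k)" by (rule conjunct1[OF f])
    then show "nk k < nk (Suc k)" by (simp only: nkS)
  qed
  moreover have "nk k \<ge> 1" for k
  proof (cases k)
    case 0
    then have e: "nk k = f 0 0" by (simp only: nk0)
    have "0 < f 0 0" by (rule conjunct1[OF f])
    then show ?thesis unfolding e by linarith
  next
    case (Suc k')
    then have e: "nk k = f k (nk k')" by (simp only: nkS)
    have "nk k' < f k (nk k')" by (rule conjunct1[OF f])
    then show ?thesis unfolding e by linarith
  qed
  moreover have Q: "\<exists>kU. \<forall>k\<ge>kU. (T ^^ nk k) ` U \<inter> U \<noteq> {}" if U: "open U" "U \<noteq> {}" for U
  proof -
    obtain m where m: "V m \<subseteq> U" using Vcov[OF U] by blast
    have "\<forall>k\<ge>m. (T ^^ nk k) ` U \<inter> U \<noteq> {}"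
    proof (intro allI impI)
      fix k assume "m \<le> k"
      then obtain y where "y \<in> V m" "(T ^^ nk k) y \<in> V m" using nkret by blast
      then show "(T ^^ nk k) ` U \<inter> U \<noteq> {}" using m by blast
    qed
    then show ?thesis by blast
  qed
  moreover have "\<forall>U. openin euclidean U \<and> U \<noteq> {} \<longrightarrow> (\<exists>kU. \<forall>k\<ge>kU. (T ^^ nk k) ` U \<inter> U \<noteq> {})"
  proof (intro allI impI)
    fix U :: "'a set" assume "openin euclidean U \<and> U \<noteq> {}"
    then have "open U" "U \<noteq> {}" by (metis open_openin)+
    then show "\<exists>kU. \<forall>k\<ge>kU. (T ^^ nk k) ` U \<inter> U \<noteq> {}" by (rule Q)
  qed
  ultimately have "top_quasi_rigid_wrt euclidean T nk"
    unfolding top_quasi_rigid_wrt_def by blast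
  then show "top_quasi_rigid euclidean T"
    unfolding top_quasi_rigid_def by blast
qed

end
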